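(* Let $a\in\mathfrak{gl}(d,\mathbb{R})$ and let $K=\mathbb{R}\ltimes\mathbb{R}^d$ be the semi-direct product in which $t\in\mathbb{R}$ acts on $\mathbb{R}^d$ by $e^{ta}$, i.e. with group law $(t,v)(s,w)=(t+s,\,v+e^{ta}w)$. Let $\lambda_1,\dots,\lambda_l$ be the nonzero purely imaginary eigenvalues of $a$. If $t\notin\bigcup_{i=1}^{l}\frac{2\pi}{\lambda_i}\sqrt{-1}\,\mathbb{Z}$, then for every $v\in\mathbb{R}^d$ the element $(t,v)$ belongs to some one-parameter subgroup of $K$. *)

theory Defs
  imports "HOL-Analysis.Analysis"
begin

fun matpow :: "real^'n^'n \<Rightarrow> nat \<Rightarrow> real^'n^'n" where
  "matpow A 0 = mat 1"
| "matpow A (Suc k) = A ** matpow A k"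

definition mexp :: "real^'n^'n \<Rightarrow> real^'n^'n" where
  "mexp A = (\<Sum>k. (1 / fact k) *\<^sub>R matpow A k)"

definition kmul :: "real^'n^'n \<Rightarrow> real \<times> (real^'n) \<Rightarrow> real \<times> (real^'n) \<Rightarrow> real \<times> (real^'n)" where
  "kmul a x y = (fst x + fst y, snd x + mexp (fst x *\<^sub>R a) *v snd y)"

definition one_param_subgroup :: "real^'n^'n \<Rightarrow> (real \<Rightarrow> real \<times> (real^'n)) \<Rightarrow> bool" where
  "one_param_subgroup a \<phi> \<longleftrightarrow> continuous_on UNIV \<phi> \<and> (\<forall>s u. \<phi> (s + u) = kmul a (\<phi> s) (\<phi> u))"

definition cplx_eigenvalue :: "real^'n^'n \<Rightarrow> complex \<Rightarrow> bool" where
  "cplx_eigenvalue a c \<longleftrightarrow>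
     (\<exists>z :: complex^'n. z \<noteq> 0 \<and> (\<chi> i j. complex_of_real (a $ i $ j)) *v z = c *s z)"

end

theory Submission
  imports Defs "HOL-Computational_Algebra.Fundamental_Theorem_Algebra"
begin


lemma mm_entry: "(A ** B) $ i $ j = (\<Sum>k\<in>UNIV. A$i$k * B$k$j)"
  by (simp add: matrix_matrix_mult_def)

lemma mm_radd: "((A::'a::semiring_1^'m^'n) + B) ** C = A ** C + B ** C"
  by (simp add: vec_eq_iff matrix_matrix_mult_def distrib_right sum.distrib)
lemma mm_scale_l: "((c::real) *\<^sub>R (A::real^'m^'n)) ** B = c *\<^sub>R (A ** B)"
  by (simp add: vec_eq_iff matrix_matrix_mult_def sum_distrib_left mult.assoc)
lemma mm_scale_r: "(A::real^'m^'n) ** ((c::real) *\<^sub>R B) = c *\<^sub>R (A ** B)"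
  by (simp add: vec_eq_iff matrix_matrix_mult_def sum_distrib_left mult.left_commute)

lemma norm_sq_vec: "(norm (x::real^'n))^2 = (\<Sum>i\<in>UNIV. (x$i)^2)"
  by (simp add: norm_vec_def L2_set_def sum_nonneg)

lemma norm_sq_mat: "(norm (A::real^'n^'m))^2 = (\<Sum>i\<in>UNIV. \<Sum>j\<in>UNIV. (A$i$j)^2)"
  by (simp add: norm_vec_def L2_set_def sum_nonneg)

lemma frob_submult: "norm ((A::real^'n^'n) ** B) \<le> norm A * norm B"
proof -
  define col where "col j = (\<chi> k. B$k$j)" for j
  have e: "(A ** B)$i$j = inner (A$i) (col j)" for i j
    by (simp add: mm_entry col_def inner_vec_def)
  have "(norm (A ** B))^2 = (\<Sum>i\<in>UNIV. \<Sum>j\<in>UNIV. (inner (A$i) (col j))^2)"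
    by (simp add: norm_sq_mat e)
  also have "\<dots> \<le> (\<Sum>i\<in>UNIV. \<Sum>j\<in>UNIV. (norm (A$i))^2 * (norm (col j))^2)"
  proof (intro sum_mono)
    fix i j
    have "\<bar>inner (A$i) (col j)\<bar> \<le> norm (A$i) * norm (col j)" by (rule Cauchy_Schwarz_ineq2)
    then have "\<bar>inner (A$i) (col j)\<bar>^2 \<le> (norm (A$i) * norm (col j))^2"
      by (intro power_mono) auto
    then show "(inner (A$i) (col j))^2 \<le> (norm (A$i))^2 * (norm (col j))^2"
      by (simp add: power_mult_distrib)
  qed
  also have "\<dots> = (\<Sum>i\<in>UNIV. (norm (A$i))^2) * (\<Sum>j\<in>UNIV. (norm (col j))^2)"
    by (simp add: sum_product)
  also have "(\<Sum>i\<in>UNIV. (norm (A$i))^2) = (norm A)^2"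
    by (simp add: norm_sq_mat norm_sq_vec)
  also have "(\<Sum>j\<in>UNIV. (norm (col j))^2) = (norm B)^2"
  proof -
    have "(\<Sum>j\<in>UNIV. (norm (col j))^2) = (\<Sum>j\<in>UNIV. \<Sum>k\<in>UNIV. (B$k$j)^2)"
      by (simp add: norm_sq_vec col_def)
    also have "\<dots> = (\<Sum>k\<in>UNIV. \<Sum>j\<in>UNIV. (B$k$j)^2)" by (rule sum.swap)
    also have "\<dots> = (norm B)^2" by (simp add: norm_sq_mat)
    finally show ?thesis .
  qed
  finally have "(norm (A ** B))^2 \<le> (norm A * norm B)^2" by (simp add: power_mult_distrib)
  then show ?thesis by (rule power2_le_imp_le) simp
qed

typedef 'n sqm = "UNIV :: (real^'n^'n) set" morphisms mo sq by auto
setup_lifting type_definition_sqm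

instantiation sqm :: (finite) ring_1
begin
lift_definition zero_sqm :: "'a sqm" is "0" .
lift_definition one_sqm :: "'a sqm" is "mat 1" .
lift_definition plus_sqm :: "'a sqm \<Rightarrow> 'a sqm \<Rightarrow> 'a sqm" is "(+)" .
lift_definition minus_sqm :: "'a sqm \<Rightarrow> 'a sqm \<Rightarrow> 'a sqm" is "(-)" .
lift_definition uminus_sqm :: "'a sqm \<Rightarrow> 'a sqm" is "uminus" .
lift_definition times_sqm :: "'a sqm \<Rightarrow> 'a sqm \<Rightarrow> 'a sqm" is "(**)" .
instance
proof
  have "mo (0::'a sqm) \<noteq> mo 1" by (simp add: zero_sqm.rep_eq one_sqm.rep_eq vec_eq_iff mat_def)
  then show "(0::'a sqm) \<noteq> 1" by metis
qed (transfer, simp add: algebra_simps matrix_mul_assoc matrix_add_ldistrib mm_radd)+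
end

instantiation sqm :: (finite) real_algebra
begin
lift_definition scaleR_sqm :: "real \<Rightarrow> 'a sqm \<Rightarrow> 'a sqm" is "scaleR" .
instance
  apply standard
  apply (transfer, simp add: algebra_simps mm_scale_l mm_scale_r)+
  done
end

instantiation sqm :: (finite) real_normed_algebra
begin
lift_definition norm_sqm :: "'a sqm \<Rightarrow> real" is "norm" .
definition sgn_sqm :: "'a sqm \<Rightarrow> 'a sqm" where "sgn_sqm x = x /\<^sub>R norm x"
definition dist_sqm :: "'a sqm \<Rightarrow> 'a sqm \<Rightarrow> real" where "dist_sqm x y = norm (x - y)"
definition uniformity_sqm :: "('a sqm \<times> 'a sqm) filter" where
  "uniformity_sqm = (INF e\<in>{0<..}. principal {(x, y). dist x y < e})"
definition open_sqm :: "'a sqm set \<Rightarrow> bool" where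
  "open_sqm U = (\<forall>x\<in>U. \<forall>\<^sub>F (x', y) in uniformity. x' = x \<longrightarrow> y \<in> U)"
instance
proof
  fix x y :: "'a sqm" and r :: real
  show "dist x y = norm (x - y)" by (simp add: dist_sqm_def)
  show "sgn x = inverse (norm x) *\<^sub>R x" by (simp add: sgn_sqm_def)
  show "uniformity = (INF e\<in>{0<..}. principal {(x::'a sqm, y). dist x y < e})"
    by (simp add: uniformity_sqm_def)
  show "open U = (\<forall>x\<in>U. \<forall>\<^sub>F (x', y) in uniformity. x' = x \<longrightarrow> y \<in> U)" for U :: "'a sqm set"
    by (simp add: open_sqm_def)
  show "(norm x = 0) = (x = 0)" by transfer simp
  show "norm (x + y) \<le> norm x + norm y" by transfer (rule norm_triangle_ineq)
  show "norm (r *\<^sub>R x) = \<bar>r\<bar> * norm x" by transfer simp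
  show "norm (x * y) \<le> norm x * norm y" by transfer (rule frob_submult)
qed
end


lemma dist_mo: "dist (mo x) (mo y) = dist x y"
  by (simp add: dist_norm dist_sqm_def norm_sqm.rep_eq minus_sqm.rep_eq)

instance sqm :: (finite) banach
proof
  fix X :: "nat \<Rightarrow> 'a sqm" assume "Cauchy X"
  hence "Cauchy (\<lambda>n. mo (X n))" by (simp add: Cauchy_def dist_mo)
  then obtain L where "(\<lambda>n. mo (X n)) \<longlonglongrightarrow> L" using Cauchy_convergent_iff convergent_def by blast
  hence "X \<longlonglongrightarrow> sq L" by (simp add: tendsto_iff dist_mo[symmetric] sq_inverse)
  thus "convergent X" by (auto simp: convergent_def)
qed

instance sqm :: (finite) real_algebra_1 ..

definition ex :: "'b::{real_normed_algebra,ring_1,banach} \<Rightarrow> real \<Rightarrow> 'b" where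
  "ex X s = (\<Sum>k. (s^k / fact k) *\<^sub>R X^k)"
definition gx :: "'b::{real_normed_algebra,ring_1,banach} \<Rightarrow> real \<Rightarrow> 'b" where
  "gx X s = (\<Sum>k. (s^Suc k / fact (Suc k)) *\<^sub>R X^k)"

lemma pow_bound:
  fixes X :: "'b::{real_normed_algebra,ring_1,banach}"
  shows "norm (X^k) \<le> max 1 (norm (1::'b)) * norm X ^ k"
proof (induction k)
  case 0 then show ?case by simp
next
  case (Suc k)
  have "norm (X^Suc k) \<le> norm X * norm (X^k)" by (simp add: norm_mult_ineq)
  also have "\<dots> \<le> norm X * (max 1 (norm (1::'b)) * norm X ^ k)"
    by (rule mult_left_mono[OF Suc]) simp
  finally show ?case by (simp add: algebra_simps)
qed

lemma ex_summ:
  fixes X :: "'b::{real_normed_algebra,ring_1,banach}"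
  shows "summable (\<lambda>k. norm ((s^k / fact k) *\<^sub>R X^k))"
proof (rule summable_comparison_test)
  let ?C = "max 1 (norm (1::'b))"
  show "summable (\<lambda>k. ?C * (inverse (fact k) * (\<bar>s\<bar> * norm X)^k))"
    by (intro summable_mult summable_exp)
  show "\<exists>N. \<forall>n\<ge>N. norm (norm ((s^n / fact n) *\<^sub>R X^n)) \<le> ?C * (inverse (fact n) * (\<bar>s\<bar> * norm X)^n)"
  proof (intro exI allI impI)
    fix n :: nat
    have "norm (norm ((s^n / fact n) *\<^sub>R X^n)) = \<bar>s\<bar>^n / fact n * norm (X^n)"
      by (simp add: power_abs)
    also have "\<dots> \<le> \<bar>s\<bar>^n / fact n * (?C * norm X ^ n)"
      by (intro mult_left_mono pow_bound) simp
    also have "\<dots> = ?C * (inverse (fact n) * (\<bar>s\<bar> * norm X)^n)"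
      by (simp add: power_mult_distrib field_simps)
    finally show "norm (norm ((s^n / fact n) *\<^sub>R X^n)) \<le> ?C * (inverse (fact n) * (\<bar>s\<bar> * norm X)^n)" .
  qed
qed

lemma gx_term_bound:
  fixes X :: "'b::{real_normed_algebra,ring_1,banach}"
  shows "norm ((s^Suc n / fact (Suc n)) *\<^sub>R X^n) \<le> \<bar>s\<bar> * (max 1 (norm (1::'b)) * (inverse (fact n) * (\<bar>s\<bar> * norm X)^n))"
proof -
  let ?C = "max 1 (norm (1::'b))"
  have f: "inverse (fact (Suc n)) \<le> (inverse (fact n) :: real)"
    by (intro le_imp_inverse_le) (auto simp: fact_mono)
  have "norm ((s^Suc n / fact (Suc n)) *\<^sub>R X^n) = \<bar>s\<bar>^Suc n * inverse (fact (Suc n)) * norm (X^n)"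
    by (simp add: power_abs divide_inverse abs_mult)
  also have "\<dots> \<le> \<bar>s\<bar>^Suc n * inverse (fact n) * (?C * norm X ^ n)"
    by (intro mult_mono pow_bound f mult_left_mono) auto
  also have "\<dots> = \<bar>s\<bar> * (?C * (inverse (fact n) * (\<bar>s\<bar> * norm X)^n))"
    by (simp add: power_mult_distrib field_simps)
  finally show ?thesis .
qed

lemma gx_summ:
  fixes X :: "'b::{real_normed_algebra,ring_1,banach}"
  shows "summable (\<lambda>k. norm ((s^Suc k / fact (Suc k)) *\<^sub>R X^k))"
proof (rule summable_comparison_test)
  let ?C = "max 1 (norm (1::'b))"
  show "summable (\<lambda>k. \<bar>s\<bar> * (?C * (inverse (fact k) * (\<bar>s\<bar> * norm X)^k)))"
    by (intro summable_mult summable_exp)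
  show "\<exists>N. \<forall>n\<ge>N. norm (norm ((s^Suc n / fact (Suc n)) *\<^sub>R X^n)) \<le> \<bar>s\<bar> * (?C * (inverse (fact n) * (\<bar>s\<bar> * norm X)^n))"
    using gx_term_bound by auto
qed

lemma binom_coef:
  fixes s u :: real
  shows "(s+u)^n / fact n = (\<Sum>i\<le>n. s^i / fact i * (u^(n-i) / fact (n-i)))"
  using exp_series_add_commuting[of s u n] by (simp add: divide_inverse mult.commute)

lemma sc_mult:
  fixes X :: "'b::{real_normed_algebra,ring_1,banach}"
  assumes "i \<le> n"
  shows "(c *\<^sub>R X^i) * (d *\<^sub>R X^(n-i)) = (c * d) *\<^sub>R X^n"
proof -
  have "X^n = X^i * X^(n-i)" using assms by (simp add: power_add[symmetric])
  then show ?thesis by (simp only: mult_scaleR_left mult_scaleR_right scaleR_scaleR mult.commute)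
qed

lemma ex_add:
  fixes X :: "'b::{real_normed_algebra,ring_1,banach}"
  shows "ex X (s+u) = ex X s * ex X u"
proof -
  have "ex X s * ex X u = (\<Sum>n. \<Sum>i\<le>n. ((s^i / fact i) *\<^sub>R X^i) * ((u^(n-i) / fact (n-i)) *\<^sub>R X^(n-i)))"
    unfolding ex_def
    by (rule Cauchy_product[of "\<lambda>i. (s^i / fact i) *\<^sub>R X^i" "\<lambda>j. (u^j / fact j) *\<^sub>R X^j", OF ex_summ ex_summ])
  also have "\<dots> = (\<Sum>n. ((s+u)^n / fact n) *\<^sub>R X^n)"
  proof (rule suminf_cong)
    fix n
    have "(\<Sum>i\<le>n. ((s^i / fact i) *\<^sub>R X^i) * ((u^(n-i) / fact (n-i)) *\<^sub>R X^(n-i)))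
        = (\<Sum>i\<le>n. (s^i / fact i * (u^(n-i) / fact (n-i))) *\<^sub>R X^n)"
      by (intro sum.cong refl) (simp only: sc_mult atMost_iff)
    also have "\<dots> = ((s+u)^n / fact n) *\<^sub>R X^n"
      by (simp add: binom_coef scaleR_sum_left)
    finally show "(\<Sum>i\<le>n. ((s^i / fact i) *\<^sub>R X^i) * ((u^(n-i) / fact (n-i)) *\<^sub>R X^(n-i))) = ((s+u)^n / fact n) *\<^sub>R X^n" .
  qed
  finally show ?thesis by (simp add: ex_def)
qed


lemma binom_coef2:
  fixes s u :: real
  shows "(\<Sum>i\<le>n. s^i / fact i * (u^Suc (n-i) / fact (Suc (n-i)))) = (s+u)^Suc n / fact (Suc n) - s^Suc n / fact (Suc n)"
proof -
  have "(s+u)^Suc n / fact (Suc n) = (\<Sum>i\<le>Suc n. s^i / fact i * (u^(Suc n-i) / fact (Suc n-i)))"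
    by (rule binom_coef)
  also have "\<dots> = (\<Sum>i\<le>n. s^i / fact i * (u^(Suc n-i) / fact (Suc n-i))) + s^Suc n / fact (Suc n)"
  proof -
    have t: "s^Suc n / fact (Suc n) * (u^(Suc n - Suc n) / fact (Suc n - Suc n)) = s^Suc n / fact (Suc n)"
      by simp
    show ?thesis by (simp only: sum.atMost_Suc t)
  qed
  also have "(\<Sum>i\<le>n. s^i / fact i * (u^(Suc n-i) / fact (Suc n-i))) = (\<Sum>i\<le>n. s^i / fact i * (u^Suc (n-i) / fact (Suc (n-i))))"
    by (intro sum.cong refl) (simp only: Suc_diff_le atMost_iff)
  finally show ?thesis by linarith
qed

lemma gx_add:
  fixes X :: "'b::{real_normed_algebra,ring_1,banach}"
  shows "gx X (s+u) = gx X s + ex X s * gx X u"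
proof -
  have "ex X s * gx X u = (\<Sum>n. \<Sum>i\<le>n. ((s^i / fact i) *\<^sub>R X^i) * ((u^Suc (n-i) / fact (Suc (n-i))) *\<^sub>R X^(n-i)))"
    unfolding ex_def gx_def
    by (rule Cauchy_product[of "\<lambda>i. (s^i / fact i) *\<^sub>R X^i" "\<lambda>j. (u^Suc j / fact (Suc j)) *\<^sub>R X^j", OF ex_summ gx_summ])
  also have "\<dots> = (\<Sum>n. ((s+u)^Suc n / fact (Suc n)) *\<^sub>R X^n - (s^Suc n / fact (Suc n)) *\<^sub>R X^n)"
  proof (rule suminf_cong)
    fix n
    have "(\<Sum>i\<le>n. ((s^i / fact i) *\<^sub>R X^i) * ((u^Suc (n-i) / fact (Suc (n-i))) *\<^sub>R X^(n-i)))
        = (\<Sum>i\<le>n. (s^i / fact i * (u^Suc (n-i) / fact (Suc (n-i)))) *\<^sub>R X^n)"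
      by (intro sum.cong refl) (simp only: sc_mult atMost_iff)
    also have "\<dots> = (\<Sum>i\<le>n. s^i / fact i * (u^Suc (n-i) / fact (Suc (n-i)))) *\<^sub>R X^n"
      by (simp only: scaleR_sum_left)
    also have "\<dots> = ((s+u)^Suc n / fact (Suc n) - s^Suc n / fact (Suc n)) *\<^sub>R X^n"
      by (simp only: binom_coef2)
    also have "\<dots> = ((s+u)^Suc n / fact (Suc n)) *\<^sub>R X^n - (s^Suc n / fact (Suc n)) *\<^sub>R X^n"
      by (rule scaleR_diff_left)
    finally show "(\<Sum>i\<le>n. ((s^i / fact i) *\<^sub>R X^i) * ((u^Suc (n-i) / fact (Suc (n-i))) *\<^sub>R X^(n-i))) = ((s+u)^Suc n / fact (Suc n)) *\<^sub>R X^n - (s^Suc n / fact (Suc n)) *\<^sub>R X^n" .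
  qed
  also have "\<dots> = gx X (s+u) - gx X s"
    unfolding gx_def
    by (rule suminf_diff[symmetric, OF summable_norm_cancel[OF gx_summ] summable_norm_cancel[OF gx_summ]])
  finally show ?thesis by simp
qed

lemma gx_small:
  fixes X :: "'b::{real_normed_algebra,ring_1,banach}"
  assumes "\<bar>u\<bar> \<le> 1"
  shows "norm (gx X u) \<le> \<bar>u\<bar> * (max 1 (norm (1::'b)) * (\<Sum>n. inverse (fact n) * norm X^n))"
proof -
  let ?C = "max 1 (norm (1::'b))"
  have sX: "summable (\<lambda>n. inverse (fact n) * norm X^n)" by (rule summable_exp)
  have "norm (gx X u) \<le> (\<Sum>k. norm ((u^Suc k / fact (Suc k)) *\<^sub>R X^k))"
    unfolding gx_def by (intro summable_norm gx_summ)
  also have "\<dots> \<le> (\<Sum>n. \<bar>u\<bar> * (?C * (inverse (fact n) * norm X^n)))"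
  proof (rule suminf_le)
    fix n
    have "(\<bar>u\<bar> * norm X)^n \<le> norm X ^ n"
      using assms by (simp add: power_mult_distrib mult_left_le_one_le power_le_one)
    then have "inverse (fact n) * (\<bar>u\<bar> * norm X)^n \<le> inverse (fact n) * norm X ^ n"
      by (intro mult_left_mono) auto
    then have "\<bar>u\<bar> * (?C * (inverse (fact n) * (\<bar>u\<bar> * norm X)^n)) \<le> \<bar>u\<bar> * (?C * (inverse (fact n) * norm X^n))"
      by (intro mult_left_mono) auto
    then show "norm ((u^Suc n / fact (Suc n)) *\<^sub>R X^n) \<le> \<bar>u\<bar> * (?C * (inverse (fact n) * norm X^n))"
      using gx_term_bound[of u n X] by linarith
    show "summable (\<lambda>k. norm ((u^Suc k / fact (Suc k)) *\<^sub>R X^k))" by (rule gx_summ)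
    show "summable (\<lambda>n. \<bar>u\<bar> * (?C * (inverse (fact n) * norm X^n)))"
      by (intro summable_mult sX)
  qed
  also have "\<dots> = \<bar>u\<bar> * (?C * (\<Sum>n. inverse (fact n) * norm X^n))"
    using sX by (simp add: suminf_mult)
  finally show ?thesis .
qed

lemma gx_tendsto0:
  fixes X :: "'b::{real_normed_algebra,ring_1,banach}"
  shows "(gx X \<longlongrightarrow> 0) (at 0)"
proof (rule Lim_null_comparison)
  define K where "K = max 1 (norm (1::'b)) * (\<Sum>n. inverse (fact n) * norm X^n)"
  show "\<forall>\<^sub>F u in at 0. norm (gx X u) \<le> \<bar>u\<bar> * K"
    unfolding K_def eventually_at
    by (rule exI[of _ 1]) (auto intro!: gx_small simp: dist_norm)
  have "((\<lambda>u::real. \<bar>u\<bar> * K) \<longlongrightarrow> \<bar>0\<bar> * K) (at 0)"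
    by (intro tendsto_intros)
  then show "((\<lambda>u::real. \<bar>u\<bar> * K) \<longlongrightarrow> 0) (at 0)" by simp
qed

lemma gx_cont:
  fixes X :: "'b::{real_normed_algebra,ring_1,banach}"
  shows "continuous_on UNIV (gx X)"
proof -
  have "isCont (gx X) s" for s
  proof -
    have "((\<lambda>h. gx X s + ex X s * gx X h) \<longlongrightarrow> gx X s + ex X s * 0) (at 0)"
      by (intro tendsto_intros gx_tendsto0)
    then have "((\<lambda>h. gx X (s + h)) \<longlongrightarrow> gx X s) (at 0)" by (simp add: gx_add)
    then show ?thesis unfolding isCont_def using LIM_offset_zero_iff
      by (metis LIM_offset_zero_cancel)
  qed
  then show ?thesis by (simp add: continuous_at_imp_continuous_on)
qed


lemma mo_pow: "mo (X^k) = matpow (mo X) k"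
  by (induction k) (simp_all add: one_sqm.rep_eq times_sqm.rep_eq)

lemma bl_mo: "bounded_linear mo"
  by (rule bounded_linear_intro[where K=1]) (simp_all add: plus_sqm.rep_eq scaleR_sqm.rep_eq norm_sqm.rep_eq)

lemma matpow_scale: "matpow (c *\<^sub>R A) k = c^k *\<^sub>R matpow A k"
  by (induction k) (simp_all add: mm_scale_l mm_scale_r)

lemma mexp_ex: "mexp (s *\<^sub>R A) = mo (ex (sq A) s)"
proof -
  have "mo (ex (sq A) s) = (\<Sum>k. mo ((s^k / fact k) *\<^sub>R (sq A)^k))"
    unfolding ex_def by (rule bounded_linear.suminf[OF bl_mo summable_norm_cancel[OF ex_summ]])
  also have "\<dots> = (\<Sum>k. (1 / fact k) *\<^sub>R matpow (s *\<^sub>R A) k)"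
    by (simp add: scaleR_sqm.rep_eq mo_pow sq_inverse matpow_scale)
  finally show ?thesis by (simp add: mexp_def)
qed

lemma Mg_sums: "(\<lambda>k. (t^k / fact (Suc k)) *\<^sub>R matpow a k) sums mo (gx (sq (t *\<^sub>R a)) 1)"
proof -
  have "(\<lambda>k. ((1::real)^Suc k / fact (Suc k)) *\<^sub>R (sq (t *\<^sub>R a))^k) sums gx (sq (t *\<^sub>R a)) 1"
    unfolding gx_def by (rule summable_sums[OF summable_norm_cancel[OF gx_summ]])
  from bounded_linear.sums[OF bl_mo this] show ?thesis
    by (simp add: scaleR_sqm.rep_eq mo_pow sq_inverse matpow_scale)
qed

lemma Mg_comm: "mo (gx (sq (t *\<^sub>R a)) 1) ** matpow a i = matpow a i ** mo (gx (sq (t *\<^sub>R a)) 1)"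
proof -
  let ?X = "sq (t *\<^sub>R a)" and ?Y = "(sq a)^i"
  have XY: "?X * ?Y = ?Y * ?X"
  proof -
    have "?X = t *\<^sub>R sq a" by (simp add: scaleR_sqm_def sq_inverse)
    then show ?thesis by (simp add: power_commutes)
  qed
  have XkY: "?X^k * ?Y = ?Y * ?X^k" for k
    by (rule power_commuting_commutes[OF XY])
  have sm: "summable (\<lambda>k. ((1::real)^Suc k / fact (Suc k)) *\<^sub>R ?X^k)"
    by (rule summable_norm_cancel[OF gx_summ])
  have "gx ?X 1 * ?Y = (\<Sum>k. ((1::real)^Suc k / fact (Suc k)) *\<^sub>R ?X^k * ?Y)"
    unfolding gx_def by (rule suminf_mult2[OF sm])
  also have "\<dots> = (\<Sum>k. ?Y * (((1::real)^Suc k / fact (Suc k)) *\<^sub>R ?X^k))"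
    by (simp only: mult_scaleR_left mult_scaleR_right XkY)
  also have "\<dots> = ?Y * gx ?X 1"
    unfolding gx_def by (rule suminf_mult[OF sm])
  finally have "gx ?X 1 * ?Y = ?Y * gx ?X 1" .
  then have "mo (gx ?X 1 * ?Y) = mo (?Y * gx ?X 1)" by simp
  then show ?thesis by (simp add: times_sqm.rep_eq mo_pow sq_inverse)
qed

lemma bl_mv: "bounded_linear (\<lambda>M::real^'n^'n. M *v y)"
proof -
  have "linear (\<lambda>M::real^'n^'n. M *v y)"
    by (intro linearI) (simp_all add: vec_eq_iff matrix_vector_mult_def sum_distrib_left mult.assoc distrib_right sum.distrib)
  then show ?thesis by (simp add: linear_conv_bounded_linear)
qed

lemma main_from_surj:
  fixes a :: "real^'n^'n" and t :: real and v y :: "real^'n"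
  assumes "mo (gx (sq (t *\<^sub>R a)) 1) *v y = v"
  shows "\<exists>\<phi>. one_param_subgroup a \<phi> \<and> (t, v) \<in> range \<phi>"
proof -
  let ?X = "sq (t *\<^sub>R a)"
  define \<phi> where "\<phi> s = (s * t, mo (gx ?X s) *v y)" for s
  have c1: "continuous_on UNIV (\<lambda>s. mo (gx ?X s) *v y)"
    using continuous_on_compose[OF gx_cont linear_continuous_on[OF bl_mo], of ?X]
      continuous_on_compose[OF _ linear_continuous_on[OF bl_mv[of y]]]
    by (simp add: o_def)
  have "continuous_on UNIV \<phi>"
    unfolding \<phi>_def by (intro continuous_on_Pair continuous_intros c1)
  moreover have "\<phi> (s + u) = kmul a (\<phi> s) (\<phi> u)" for s u
  proof -
    have "mexp ((s * t) *\<^sub>R a) = mo (ex ?X s)"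
      using mexp_ex[of s "t *\<^sub>R a"] by simp
    then show ?thesis
      by (simp add: \<phi>_def kmul_def gx_add plus_sqm.rep_eq times_sqm.rep_eq
          matrix_vector_mult_add_rdistrib matrix_vector_mul_assoc algebra_simps)
  qed
  moreover have "\<phi> 1 = (t, v)" using assms by (simp add: \<phi>_def)
  ultimately show ?thesis unfolding one_param_subgroup_def by (metis rangeI)
qed




definition cm :: "real^'n^'n \<Rightarrow> complex^'n^'n" where "cm M = (\<chi> i j. complex_of_real (M$i$j))"
definition cv :: "real^'n \<Rightarrow> complex^'n" where "cv x = (\<chi> i. complex_of_real (x$i))"

lemma cm_mult: "cm (M ** N) = cm M ** cm N"
  by (simp add: cm_def matrix_matrix_mult_def vec_eq_iff)
lemma cm_mv: "cm M *v cv x = cv (M *v x)"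
  by (simp add: cm_def cv_def matrix_vector_mult_def vec_eq_iff)
lemma cv_eq0: "cv x = 0 \<longleftrightarrow> x = 0"
  by (simp add: cv_def vec_eq_iff)
lemma cv_diff: "cv (x - y) = cv x - cv y"
  by (simp add: cv_def vec_eq_iff)
lemma cv_sum: "cv (\<Sum>j\<in>S. f j) = (\<Sum>j\<in>S. cv (f j))"
  by (induction S rule: infinite_finite_induct) (simp_all add: cv_def vec_eq_iff)
lemma cv_scale: "cv (c *\<^sub>R x) = complex_of_real c *s cv x"
  by (simp add: cv_def vec_eq_iff)
lemma cm_one: "cm (mat 1) = mat 1"
  by (simp add: cm_def vec_eq_iff mat_def)
lemma mv_scal: "(B::'a::comm_ring_1^'n^'m) *v (c *s w) = c *s (B *v w)"
  by (simp add: vec_eq_iff matrix_vector_mult_def sum_distrib_left mult.left_commute)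
lemma mv_sum: "(B::'a::comm_ring_1^'n^'m) *v (\<Sum>i\<in>S. f i) = (\<Sum>i\<in>S. B *v f i)"
  by (induction S rule: infinite_finite_induct) (simp_all add: matrix_vector_right_distrib)
lemma smult_sum: "(c::'a::comm_ring_1) *s (\<Sum>i\<in>S. f i) = (\<Sum>i\<in>S. c *s (f i :: 'a^'n))"
  by (induction S rule: infinite_finite_induct) (simp_all add: vector_add_ldistrib)

lemma neg_smult: "(-c) *s (v::'a::comm_ring_1^'n) = -(c *s v)"
  by (simp add: vec_eq_iff)

definition pev :: "real^'n^'n \<Rightarrow> complex poly \<Rightarrow> complex^'n \<Rightarrow> complex^'n" where
  "pev a p w = (\<Sum>i\<le>degree p. coeff p i *s (cm (matpow a i) *v w))"

lemma pev_N:
  assumes "degree p < N"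
  shows "pev a p w = (\<Sum>i<N. coeff p i *s (cm (matpow a i) *v w))"
  unfolding pev_def
  by (rule sum.mono_neutral_left) (use assms in \<open>auto simp: coeff_eq_0\<close>)

lemma pev_add: "pev a (p + q) w = pev a p w + pev a q w"
proof -
  let ?N = "Suc (max (degree p) (degree q))"
  have "degree (p + q) < ?N" using degree_add_le_max[of p q] by simp
  then show ?thesis
    by (simp add: pev_N[of _ ?N] vector_sadd_rdistrib sum.distrib)
qed

lemma pev_smult: "pev a (smult c p) w = c *s pev a p w"
proof -
  let ?N = "Suc (degree p)"
  have "degree (smult c p) < ?N" using degree_smult_le[of c p] by simp
  then show ?thesis
    by (simp add: pev_N[of _ ?N] smult_sum vector_smult_assoc)
qed

lemma pev_pCons0: "pev a (pCons 0 p) w = cm a *v pev a p w"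
proof -
  let ?N = "Suc (Suc (degree p))"
  have d: "degree (pCons 0 p) < ?N" by (simp add: degree_pCons_le le_imp_less_Suc)
  have "pev a (pCons 0 p) w = (\<Sum>i<?N. coeff (pCons 0 p) i *s (cm (matpow a i) *v w))"
    by (rule pev_N[OF d])
  also have "\<dots> = (\<Sum>i<Suc (degree p). coeff p i *s (cm (matpow a (Suc i)) *v w))"
    by (subst sum.lessThan_Suc_shift) simp
  also have "\<dots> = cm a *v (\<Sum>i<Suc (degree p). coeff p i *s (cm (matpow a i) *v w))"
    by (simp only: mv_sum mv_scal matpow.simps cm_mult matrix_vector_mul_assoc)
  also have "(\<Sum>i<Suc (degree p). coeff p i *s (cm (matpow a i) *v w)) = pev a p w"
    by (rule pev_N[symmetric]) simp
  finally show ?thesis .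
qed

lemma pev_1: "pev a 1 w = w"
  by (simp add: pev_def cm_one)

lemma pev_0: "pev a 0 w = 0"
  by (simp add: pev_def)

lemma pev_lin: "pev a ([:-\<mu>, 1:] * q) w = cm a *v pev a q w - \<mu> *s pev a q w"
proof -
  have "[:-\<mu>, 1:] * q = smult (-\<mu>) q + pCons 0 q" by (simp add: mult_pCons_left)
  then have "pev a ([:-\<mu>, 1:] * q) w = (-\<mu>) *s pev a q w + cm a *v pev a q w"
    by (simp only: pev_add pev_smult pev_pCons0)
  then show ?thesis by (simp add: neg_smult)
qed

lemma pev_monom: "pev a (monom c j) w = c *s (cm (matpow a j) *v w)"
proof -
  have "degree (monom c j) < Suc j" using degree_monom_le[of c j] by simp
  then have "pev a (monom c j) w = (\<Sum>i<Suc j. coeff (monom c j) i *s (cm (matpow a i) *v w))"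
    by (rule pev_N)
  also have "\<dots> = c *s (cm (matpow a j) *v w)"
    by (simp add: coeff_monom sum.lessThan_Suc)
  finally show ?thesis .
qed

lemma pev_diff: "pev a (p - q) w = pev a p w - pev a q w"
proof -
  have "p - q = p + smult (-1) q" by simp
  then have "pev a (p - q) w = pev a p w + (-1) *s pev a q w" by (simp only: pev_add pev_smult)
  then show ?thesis by (simp add: neg_smult)
qed

lemma pev_sum:
  fixes k :: nat
  shows "pev a (\<Sum>j<k. f j) w = (\<Sum>j<k. pev a (f j) w)"
  by (induction k) (simp_all add: pev_add pev_0)

lemma pev_comm:
  assumes "\<And>i. B ** cm (matpow a i) = cm (matpow a i) ** B"
  shows "B *v pev a q w = pev a q (B *v w)"
  unfolding pev_def
  by (simp add: mv_sum mv_scal matrix_vector_mul_assoc assms)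


lemma span_lessThan:
  fixes f :: "nat \<Rightarrow> 'v::real_vector"
  shows "y \<in> span (f ` {..<k}) \<Longrightarrow> \<exists>c. y = (\<Sum>j<k. c j *\<^sub>R f j)"
proof (induction k arbitrary: y)
  case 0 then show ?case by simp
next
  case (Suc k)
  have "f ` {..<Suc k} = insert (f k) (f ` {..<k})" by (simp add: lessThan_Suc)
  with Suc.prems obtain r where "y - r *\<^sub>R f k \<in> span (f ` {..<k})" by (auto simp: span_insert)
  from Suc.IH[OF this] obtain c where c: "y - r *\<^sub>R f k = (\<Sum>j<k. c j *\<^sub>R f j)" by blast
  have "(\<Sum>j<Suc k. (c(k:=r)) j *\<^sub>R f j) = (\<Sum>j<k. (c(k:=r)) j *\<^sub>R f j) + r *\<^sub>R f k"
    by simp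
  also have "(\<Sum>j<k. (c(k:=r)) j *\<^sub>R f j) = (\<Sum>j<k. c j *\<^sub>R f j)"
    by (intro sum.cong) auto
  finally have "y = (\<Sum>j<Suc k. (c(k:=r)) j *\<^sub>R f j)" using c by (simp add: algebra_simps)
  then show ?case by blast
qed

lemma dep_exists:
  fixes a :: "real^'n^'n" and x :: "real^'n"
  shows "\<exists>k c. matpow a k *v x = (\<Sum>j<k. c j *\<^sub>R (matpow a j *v x))"
proof (rule ccontr)
  assume H: "\<not> ?thesis"
  define f where "f j = matpow a j *v x" for j
  have nsp: "f k \<notin> span (f ` {..<k})" for k
    using span_lessThan[of "f k" f k] H unfolding f_def by blast
  have d: "dim (f ` {..<k}) = k" for k
  proof (induction k)
    case 0 show ?case by simp
  next
    case (Suc k)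
    have "f ` {..<Suc k} = insert (f k) (f ` {..<k})" by (simp add: lessThan_Suc)
    then show ?case using Suc nsp[of k] by (simp add: dim_insert)
  qed
  have "dim (f ` {..<Suc CARD('n)}) \<le> CARD('n)" by (rule dim_subset_UNIV_cart)
  with d show False by (metis Suc_n_not_le_n)
qed

lemma scaleR_smult: "r *\<^sub>R (v::complex^'n) = complex_of_real r *s v"
  by (simp add: vec_eq_iff scaleR_conv_of_real[where 'a=complex])

lemma cm_scale_mv: "cm (r *\<^sub>R M) *v y = complex_of_real r *s (cm M *v y)"
  by (simp add: cm_def vec_eq_iff matrix_vector_mult_def sum_distrib_left mult.assoc)

lemma Mg_inj:
  fixes a :: "real^'n^'n" and t :: real and x :: "real^'n"
  assumes hyp: "\<forall>c. (cplx_eigenvalue a c \<and> Re c = 0 \<and> c \<noteq> 0) \<longrightarrow>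
             complex_of_real t \<notin> {(2 * complex_of_real pi / c) * \<i> * of_int k | k :: int. True}"
  and Mx: "mo (gx (sq (t *\<^sub>R a)) 1) *v x = 0"
  shows "x = 0"
proof (rule ccontr)
  assume x0: "x \<noteq> 0"
  define Mg where "Mg = mo (gx (sq (t *\<^sub>R a)) 1)"
  define Mc where "Mc = cm Mg"
  have comm: "Mc ** cm (matpow a i) = cm (matpow a i) ** Mc" for i
    unfolding Mc_def Mg_def by (simp only: cm_mult[symmetric] Mg_comm)
  obtain k c where kc: "matpow a k *v x = (\<Sum>j<k. c j *\<^sub>R (matpow a j *v x))"
    using dep_exists by blast
  define p where "p = monom 1 k - (\<Sum>j<k. monom (complex_of_real (c j)) j)"
  have p0: "pev a p (cv x) = 0"
  proof -
    have "pev a p (cv x) = cm (matpow a k) *v cv x - (\<Sum>j<k. complex_of_real (c j) *s (cm (matpow a j) *v cv x))"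
      by (simp add: p_def pev_diff pev_sum pev_monom)
    also have "\<dots> = cv (matpow a k *v x - (\<Sum>j<k. c j *\<^sub>R (matpow a j *v x)))"
      by (simp add: cm_mv cv_diff cv_sum cv_scale)
    also have "\<dots> = 0" using kc by (simp add: cv_eq0)
    finally show ?thesis .
  qed
  have "coeff p k = 1" by (simp add: p_def coeff_diff coeff_sum coeff_monom)
  hence pn0: "p \<noteq> 0" by auto
  obtain root where rt: "smult (lead_coeff p) (\<Prod>i<degree p. [:-root i, 1:]) = p"
    using complex_poly_decompose' by blast
  define Z where "Z j = pev a (\<Prod>i<j. [:-root i, 1:]) (cv x)" for j
  have Z0: "Z 0 \<noteq> 0" by (simp add: Z_def pev_1 cv_eq0 x0)
  have ZD: "Z (degree p) = 0"
  proof -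
    have "lead_coeff p *s Z (degree p) = pev a (smult (lead_coeff p) (\<Prod>i<degree p. [:-root i, 1:])) (cv x)"
      unfolding Z_def by (simp only: pev_smult)
    also have "\<dots> = 0" using rt p0 by simp
    finally show ?thesis using pn0 by simp
  qed
  have ZS: "Z (Suc j) = cm a *v Z j - root j *s Z j" for j
  proof -
    have "(\<Prod>i<Suc j. [:-root i, 1:]) = [:-root j, 1:] * (\<Prod>i<j. [:-root i, 1:])"
      by (simp add: mult.commute)
    then show ?thesis unfolding Z_def by (simp only: pev_lin)
  qed
  have Mcx: "Mc *v cv x = 0" using Mx by (simp add: Mc_def Mg_def cm_mv cv_eq0)
  have MZ: "Mc *v Z j = 0" for j
  proof -
    have "Mc *v Z j = pev a (\<Prod>i<j. [:-root i, 1:]) (Mc *v cv x)"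
      unfolding Z_def by (rule pev_comm[OF comm])
    then show ?thesis by (simp add: Mcx pev_def)
  qed
  obtain j where Zj: "Z j \<noteq> 0" "Z (Suc j) = 0"
  proof -
    have "\<exists>j. Z j \<noteq> 0 \<and> Z (Suc j) = 0"
    proof (rule ccontr)
      assume "\<not> ?thesis"
      then have "Z j \<noteq> 0" for j by (induction j) (use Z0 in auto)
      with ZD show False by blast
    qed
    then show ?thesis using that by blast
  qed
  define y where "y = Z j"
  define \<mu> where "\<mu> = root j"
  have y0: "y \<noteq> 0" using Zj y_def by simp
  have ev: "cm a *v y = \<mu> *s y" using Zj(2) ZS[of j] by (simp add: y_def \<mu>_def)
  have My: "Mc *v y = 0" using MZ y_def by simp
  have eig: "cplx_eigenvalue a \<mu>" unfolding cplx_eigenvalue_def using y0 ev by (auto simp: cm_def)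
  have powy: "cm (matpow a n) *v y = \<mu>^n *s y" for n
  proof (induction n)
    case 0 then show ?case by (simp add: cm_one)
  next
    case (Suc n)
    have "cm (matpow a (Suc n)) *v y = cm a *v (cm (matpow a n) *v y)"
      by (simp add: cm_mult matrix_vector_mul_assoc)
    also have "\<dots> = \<mu>^Suc n *s y" by (simp add: Suc mv_scal ev vector_smult_assoc mult.commute)
    finally show ?case .
  qed
  define w where "w = complex_of_real t * \<mu>"
  define f where "f n = w^n / fact (Suc n)" for n
  have bl: "bounded_linear (\<lambda>M::real^'n^'n. cm M *v y)"
  proof -
    have "linear (\<lambda>M::real^'n^'n. cm M *v y)"
    proof (rule linearI)
      fix b1 b2 :: "real^'n^'n" and r :: real
      show "cm (b1 + b2) *v y = cm b1 *v y + cm b2 *v y"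
        by (simp add: cm_def vec_eq_iff matrix_vector_mult_def sum.distrib distrib_right)
      show "cm (r *\<^sub>R b1) *v y = r *\<^sub>R (cm b1 *v y)"
        by (simp add: cm_scale_mv scaleR_smult)
    qed
    then show ?thesis by (simp add: linear_conv_bounded_linear)
  qed
  have blc: "bounded_linear (\<lambda>c::complex. c *s y)"
  proof -
    have "linear (\<lambda>c::complex. c *s y)"
    proof (rule linearI)
      fix c1 c2 :: complex and r :: real
      show "(c1 + c2) *s y = c1 *s y + c2 *s y" by (rule vector_sadd_rdistrib)
      show "(r *\<^sub>R c1) *s y = r *\<^sub>R (c1 *s y)"
        by (simp only: scaleR_smult vector_smult_assoc scaleR_conv_of_real)
    qed
    then show ?thesis by (simp add: linear_conv_bounded_linear)
  qed
  have s1: "(\<lambda>n. f n *s y) sums 0"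
  proof -
    from bounded_linear.sums[OF bl Mg_sums[of t a]]
    have "(\<lambda>n. cm ((t^n / fact (Suc n)) *\<^sub>R matpow a n) *v y) sums (Mc *v y)"
      by (simp add: Mc_def Mg_def)
    moreover have "cm ((t^n / fact (Suc n)) *\<^sub>R matpow a n) *v y = f n *s y" for n
      by (simp add: cm_scale_mv powy vector_smult_assoc f_def w_def power_mult_distrib)
    ultimately show ?thesis using My by simp
  qed
  show False
  proof (cases "w = 0")
    case True
    have "(\<lambda>n. f n *s y) = (\<lambda>n. if n = 0 then y else 0)" by (rule ext) (simp add: f_def True)
    then have "(\<lambda>n. f n *s y) sums y" using sums_single[of 0 "\<lambda>_. y"] by simp
    with s1 have "y = 0" using sums_unique2 by blast
    with y0 show False by simp
  next
    case False
    have "(\<lambda>n. w^n /\<^sub>R fact n) sums exp w" by (rule exp_converges)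
    then have "(\<lambda>n. w^Suc n /\<^sub>R fact (Suc n)) sums (exp w - 1)" by (subst sums_Suc_iff) simp
    then have "(\<lambda>n. (w^Suc n /\<^sub>R fact (Suc n)) / w) sums ((exp w - 1) / w)" by (rule sums_divide)
    moreover have "(w^Suc n /\<^sub>R fact (Suc n)) / w = f n" for n
    proof -
      have "(w^Suc n /\<^sub>R fact (Suc n)) / w = (w * w^n) / (w * fact (Suc n))"
        by (simp add: scaleR_conv_of_real divide_inverse del: fact_Suc)
      also have "\<dots> = f n" using False by (unfold f_def, rule nonzero_mult_divide_mult_cancel_left)
      finally show ?thesis .
    qed
    ultimately have "f sums ((exp w - 1)/w)" by simp
    from bounded_linear.sums[OF blc this] have "(\<lambda>n. f n *s y) sums (((exp w - 1)/w) *s y)" .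
    with s1 have "((exp w - 1)/w) *s y = 0" using sums_unique2 by metis
    with y0 False have ew: "exp w = 1" by simp
    then obtain n :: int where Rw: "Re w = 0" and Iw: "Im w = of_int (2*n) * pi" using exp_eq_1 by blast
    have weq: "w = \<i> * (2 * of_real pi * of_int n)" using Rw Iw by (simp add: complex_eq_iff)
    have n0: "n \<noteq> 0" using False weq by auto
    have t0: "t \<noteq> 0" using False w_def by auto
    have mu: "\<mu> = w / complex_of_real t" using t0 w_def by simp
    have Rmu: "Re \<mu> = 0" using mu Rw t0 by (simp add: Re_divide_of_real)
    have mu0: "\<mu> \<noteq> 0" using False w_def by auto
    have "complex_of_real t = (2 * complex_of_real pi / \<mu>) * \<i> * of_int n"
      using t0 n0 by (simp add: mu weq field_simps)
    then have "complex_of_real t \<in> {(2 * complex_of_real pi / \<mu>) * \<i> * of_int k | k :: int. True}" by blast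
    with hyp eig Rmu mu0 show False by blast
  qed
qed

theorem lemma8p1:
  fixes a :: "real^'n^'n" and t :: real and v :: "real^'n"
  assumes "\<forall>c. (cplx_eigenvalue a c \<and> Re c = 0 \<and> c \<noteq> 0) \<longrightarrow>
             complex_of_real t \<notin> {(2 * complex_of_real pi / c) * \<i> * of_int k | k :: int. True}"
  shows "\<exists>\<phi>. one_param_subgroup a \<phi> \<and> (t, v) \<in> range \<phi>"
proof -
  let ?M = "mo (gx (sq (t *\<^sub>R a)) 1)"
  have lin: "linear ((*v) ?M)" by (rule matrix_vector_mul_linear)
  have "inj ((*v) ?M)" using Mg_inj[OF assms] linear_injective_0[OF lin] by auto
  then have "surj ((*v) ?M)" using linear_injective_imp_surjective[OF lin] by blast
  then obtain y where "?M *v y = v" by (metis surjD)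
  then show ?thesis by (rule main_from_surj)
qed

end
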